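(* Let $\mathbf{L}'$ be an ortholattice with lattice reduct $\mathbf{L}$, and let $(P_{\mathbf{L}},E,\mathscr{T}_{\mathbf{L}},g)$ be its dual. Then for all $x\in P_{\mathbf{L}}$ and all $x,y\in P_{\mathbf{L}}$ the map $g$ satisfies: (M1) $g(g(x))=x$; (M2) $xE\subseteq yE\implies Eg(x)\subseteq Eg(y)$; (M3) $Ex\subseteq Ey\implies g(x)E\subseteq g(y)E$; (O) for every $x\in P_{\mathbf{L}}$ there exists $y\in P_{\mathbf{L}}$ with $yE\subseteq xE$ and $Ey\subseteq Eg(x)$.
   Context: An ortholattice is a bounded lattice $(L;\vee,\wedge,0,1)$ with an operation $'$ satisfying $a''=a$, $a\wedge a'=0$, $a\vee a'=1$ and the De Morgan laws. A partial homomorphism $\mathbf{L}\to\mathbf{2}$ is a partial map $f:L\to\{0,1\}$ whose domain is a $(0,1)$-sublattice and whose restriction is a $(0,1)$-homomorphism; an MPH is one with no proper extension; $P_{\mathbf{L}}$ is the set of MPHs. $(f,h)\in E$ iff $f(a)\le h(a)$ for all $a\in\mathrm{dom}f\cap\mathrm{dom}h$. $\mathscr{T}_{\mathbf{L}}$ has subbasis of closed sets $V_a=\{f: f(a)=0\}$, $W_a=\{f: f(a)=1\}$. The dual of $\mathbf{L}'$ is $(P_{\mathbf{L}},E,\mathscr{T}_{\mathbf{L}},g)$ where $g(f)(a)=0$ if $f(a')=1$, $g(f)(a)=1$ if $f(a')=0$, undefined otherwise (an MPH). For $x$: $xE=\{y:(x,y)\in E\}$, $Ex=\{y:(y,x)\in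 E\}$. *)

theory Defs
  imports "HOL-Library.Complemented_Lattices"
begin

text \<open>Partial maps L to 2 are modelled as 'a => bool option (False = 0, True = 1).\<close>

definition partial_hom :: "('a::bounded_lattice \<Rightarrow> bool option) \<Rightarrow> bool" where
  "partial_hom f \<longleftrightarrow>
     bot \<in> dom f \<and> top \<in> dom f \<and>
     (\<forall>a\<in>dom f. \<forall>b\<in>dom f. sup a b \<in> dom f \<and> inf a b \<in> dom f) \<and>
     f bot = Some False \<and> f top = Some True \<and>
     (\<forall>a\<in>dom f. \<forall>b\<in>dom f.
        f (sup a b) = Some (the (f a) \<or> the (f b)) \<and>
        f (inf a b) = Some (the (f a) \<and> the (f b)))"

definition MPH :: "('a::bounded_lattice \<Rightarrow> bool option) \<Rightarrow> bool" where
  "MPH f \<longleftrightarrow> partial_hom f \<and> (\<forall>h. partial_hom h \<and> f \<subseteq>\<^sub>m h \<longrightarrow> h = f)"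

definition PL :: "('a::bounded_lattice \<Rightarrow> bool option) set" where
  "PL = {f. MPH f}"

definition dualE :: "('a \<Rightarrow> bool option) \<Rightarrow> ('a \<Rightarrow> bool option) \<Rightarrow> bool" where
  "dualE f h \<longleftrightarrow> (\<forall>a\<in>dom f \<inter> dom h. the (f a) \<le> the (h a))"

definition dualg :: "('a::orthocomplemented_lattice \<Rightarrow> bool option) \<Rightarrow> ('a \<Rightarrow> bool option)" where
  "dualg f = (\<lambda>a. case f (- a) of Some True \<Rightarrow> Some False
                                | Some False \<Rightarrow> Some True
                                | None \<Rightarrow> None)"

text \<open>xE and Ex, taken inside P_L.\<close>
definition succE :: "('a::bounded_lattice \<Rightarrow> bool option) \<Rightarrow> ('a \<Rightarrow> bool option) set" where
  "succE x = {y \<in> PL. dualE x y}"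

definition predE :: "('a::bounded_lattice \<Rightarrow> bool option) \<Rightarrow> ('a \<Rightarrow> bool option) set" where
  "predE x = {y \<in> PL. dualE y x}"

end

theory Submission
  imports Defs
begin

lemma dualg_dualg: "dualg (dualg (x::'a::orthocomplemented_lattice \<Rightarrow> bool option)) = x"
  unfolding dualg_def by (rule ext) (auto split: option.splits bool.splits)

lemma dualg_mono: "f \<subseteq>\<^sub>m h \<Longrightarrow> dualg f \<subseteq>\<^sub>m dualg (h::'a::orthocomplemented_lattice \<Rightarrow> bool option)"
  unfolding map_le_def dualg_def dom_def
  by (auto split: option.splits bool.splits)

lemma dom_dualg: "a \<in> dom (dualg f) \<longleftrightarrow> - a \<in> dom (f::'a::orthocomplemented_lattice \<Rightarrow> bool option)"
  unfolding dualg_def dom_def by (auto split: option.splits bool.splits)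

lemma dualg_Some: "f (- a) = Some v \<Longrightarrow> dualg f a = Some (\<not> v)"
  unfolding dualg_def by (cases v) auto

lemma dualg_False: "dualg f a = Some False \<longleftrightarrow> f (- a) = Some True"
  unfolding dualg_def by (auto split: option.splits bool.splits)

lemma dualg_True: "dualg f a = Some True \<longleftrightarrow> f (- a) = Some False"
  unfolding dualg_def by (auto split: option.splits bool.splits)

lemma partial_hom_dualg:
  assumes "partial_hom (f::'a::orthocomplemented_lattice \<Rightarrow> bool option)"
  shows "partial_hom (dualg f)"
proof -
  have bt: "bot \<in> dom f" "top \<in> dom f" "f bot = Some False" "f top = Some True"
    and cl: "\<And>a b. a \<in> dom f \<Longrightarrow> b \<in> dom f \<Longrightarrow> sup a b \<in> dom f \<and> inf a b \<in> dom f"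
    and hm: "\<And>a b. a \<in> dom f \<Longrightarrow> b \<in> dom f \<Longrightarrow>
        f (sup a b) = Some (the (f a) \<or> the (f b)) \<and> f (inf a b) = Some (the (f a) \<and> the (f b))"
    using assms unfolding partial_hom_def by blast+
  have D: "\<And>a. a \<in> dom (dualg f) \<Longrightarrow> dualg f a = Some (\<not> the (f (- a)))"
    using dualg_Some dom_dualg by (metis domD option.sel)
  show ?thesis unfolding partial_hom_def
  proof (intro conjI ballI)
    show "bot \<in> dom (dualg f)" "top \<in> dom (dualg f)" using bt by (simp_all add: dom_dualg)
    show "dualg f bot = Some False" "dualg f top = Some True"
      using bt by (simp_all add: dualg_True dualg_False)
  next
    fix a b assume a: "a \<in> dom (dualg f)" and b: "b \<in> dom (dualg f)"
    hence a': "- a \<in> dom f" and b': "- b \<in> dom f" by (simp_all add: dom_dualg)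
    show "sup a b \<in> dom (dualg f)" "inf a b \<in> dom (dualg f)"
      using cl[OF a' b'] by (simp_all add: dom_dualg)
    show "dualg f (sup a b) = Some (the (dualg f a) \<or> the (dualg f b))"
      using hm[OF a' b'] D[OF a] D[OF b] by (simp add: dualg_Some)
    show "dualg f (inf a b) = Some (the (dualg f a) \<and> the (dualg f b))"
      using hm[OF a' b'] D[OF a] D[OF b] by (simp add: dualg_Some)
  qed
qed

lemma MPH_dualg:
  assumes "MPH (f::'a::orthocomplemented_lattice \<Rightarrow> bool option)"
  shows "MPH (dualg f)"
  unfolding MPH_def
proof (intro conjI allI impI)
  show "partial_hom (dualg f)" using assms partial_hom_dualg unfolding MPH_def by blast
  fix h assume h: "partial_hom h \<and> dualg f \<subseteq>\<^sub>m h"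
  hence "f \<subseteq>\<^sub>m dualg h" using dualg_mono dualg_dualg by metis
  hence "dualg h = f" using assms partial_hom_dualg h unfolding MPH_def by blast
  thus "h = dualg f" using dualg_dualg by metis
qed

lemma dualE_alt: "dualE f h \<longleftrightarrow> (\<forall>a. \<not> (f a = Some True \<and> h a = Some False))"
proof
  assume H: "dualE f h"
  show "\<forall>a. \<not> (f a = Some True \<and> h a = Some False)"
  proof (intro allI notI)
    fix a assume "f a = Some True \<and> h a = Some False"
    with H show False unfolding dualE_def by (metis IntI domIff option.distinct(1) option.sel le_boolD)
  qed
next
  assume H: "\<forall>a. \<not> (f a = Some True \<and> h a = Some False)"
  show "dualE f h" unfolding dualE_def
  proof
    fix a assume "a \<in> dom f \<inter> dom h"
    then obtain u v where "f a = Some u" "h a = Some v" by blast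
    with H show "the (f a) \<le> the (h a)" by (cases u; cases v) auto
  qed
qed

lemma dualE_dualg:
  "dualE z (dualg x) \<longleftrightarrow> dualE x (dualg (z::'a::orthocomplemented_lattice \<Rightarrow> bool option))"
  unfolding dualE_alt dualg_False by (metis ortho_involution)

lemma chain_ub:
  fixes C :: "('a::bounded_lattice \<Rightarrow> bool option) set"
  assumes ne: "C \<noteq> {}" and ph: "\<And>f. f \<in> C \<Longrightarrow> partial_hom f"
    and ch: "\<And>f g. f \<in> C \<Longrightarrow> g \<in> C \<Longrightarrow> f \<subseteq>\<^sub>m g \<or> g \<subseteq>\<^sub>m f"
  shows "\<exists>U. partial_hom U \<and> (\<forall>f\<in>C. f \<subseteq>\<^sub>m U)"
proof -
  define U where "U a = (if \<exists>f\<in>C. a \<in> dom f then (SOME f. f \<in> C \<and> a \<in> dom f) a else None)" for a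
  have U: "U a = f a" if "f \<in> C" "a \<in> dom f" for f a
  proof -
    have ex: "\<exists>f. f \<in> C \<and> a \<in> dom f" using that by blast
    define f' where "f' = (SOME f. f \<in> C \<and> a \<in> dom f)"
    have f': "f' \<in> C" "a \<in> dom f'" using someI_ex[OF ex] unfolding f'_def by auto
    have "U a = f' a" unfolding U_def f'_def using that by auto
    moreover have "f' a = f a" using ch[OF f'(1) that(1)] f'(2) that(2)
      unfolding map_le_def by metis
    ultimately show ?thesis by simp
  qed
  have domU: "a \<in> dom U \<longleftrightarrow> (\<exists>f\<in>C. a \<in> dom f)" for a
  proof
    assume "a \<in> dom U" thus "\<exists>f\<in>C. a \<in> dom f" unfolding U_def by (auto split: if_splits)
  next
    assume "\<exists>f\<in>C. a \<in> dom f" thus "a \<in> dom U" using U by (metis domIff)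
  qed
  have two: "\<exists>k\<in>C. a \<in> dom k \<and> b \<in> dom k" if ab: "a \<in> dom U" "b \<in> dom U" for a b
  proof -
    obtain f g where fg: "f \<in> C" "a \<in> dom f" "g \<in> C" "b \<in> dom g" using ab domU by blast
    from ch[OF fg(1) fg(3)] show ?thesis
    proof
      assume "f \<subseteq>\<^sub>m g" hence "dom f \<subseteq> dom g" by (rule map_le_implies_dom_le)
      thus ?thesis using fg by blast
    next
      assume "g \<subseteq>\<^sub>m f" hence "dom g \<subseteq> dom f" by (rule map_le_implies_dom_le)
      thus ?thesis using fg by blast
    qed
  qed
  obtain f0 where f0: "f0 \<in> C" using ne by blast
  have "partial_hom U" unfolding partial_hom_def
  proof (intro conjI ballI)
    have p: "partial_hom f0" using ph f0 by blast
    hence "bot \<in> dom f0" "top \<in> dom f0" "f0 bot = Some False" "f0 top = Some True"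
      unfolding partial_hom_def by blast+
    thus "bot \<in> dom U" "top \<in> dom U" "U bot = Some False" "U top = Some True"
      using U[OF f0] domU f0 by auto
  next
    fix a b assume "a \<in> dom U" "b \<in> dom U"
    then obtain k where k: "k \<in> C" "a \<in> dom k" "b \<in> dom k" using two by blast
    have p: "partial_hom k" using ph k by blast
    have s: "sup a b \<in> dom k" "inf a b \<in> dom k"
      and h: "k (sup a b) = Some (the (k a) \<or> the (k b))" "k (inf a b) = Some (the (k a) \<and> the (k b))"
      using p k unfolding partial_hom_def by blast+
    show "sup a b \<in> dom U" "inf a b \<in> dom U" using s k domU by blast+
    show "U (sup a b) = Some (the (U a) \<or> the (U b))" "U (inf a b) = Some (the (U a) \<and> the (U b))"
      using h U[OF k(1)] k s by auto
  qed
  moreover have "\<forall>f\<in>C. f \<subseteq>\<^sub>m U" using U unfolding map_le_def by auto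
  ultimately show ?thesis by blast
qed

lemma MPH_extend:
  fixes h0 :: "'a::bounded_lattice \<Rightarrow> bool option"
  assumes "partial_hom h0"
  shows "\<exists>m. MPH m \<and> h0 \<subseteq>\<^sub>m m"
proof -
  let ?A = "{f. partial_hom f \<and> h0 \<subseteq>\<^sub>m f}"
  have po: "partial_order_on ?A (relation_of map_le ?A)"
    by (rule partial_order_on_relation_ofI) (auto intro: map_le_trans map_le_antisym)
  have chs: "\<exists>u\<in>?A. \<forall>a\<in>C. a \<subseteq>\<^sub>m u" if "C \<in> Chains (relation_of map_le ?A)" for C
  proof (cases "C = {}")
    case True thus ?thesis using assms by auto
  next
    case False
    have CA: "C \<subseteq> ?A" and cm: "\<And>f g. f \<in> C \<Longrightarrow> g \<in> C \<Longrightarrow> f \<subseteq>\<^sub>m g \<or> g \<subseteq>\<^sub>m f"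
      using that False unfolding Chains_def relation_of_def by auto
    obtain U where U: "partial_hom U" "\<forall>f\<in>C. f \<subseteq>\<^sub>m U"
      using chain_ub[OF False _ cm] CA by blast
    obtain f where "f \<in> C" using False by blast
    hence "h0 \<subseteq>\<^sub>m U" using CA U map_le_trans by blast
    thus ?thesis using U by blast
  qed
  obtain m where m: "m \<in> ?A" and mx: "\<forall>a\<in>?A. m \<subseteq>\<^sub>m a \<longrightarrow> a = m"
    using predicate_Zorn[OF po chs] by blast
  have "MPH m" unfolding MPH_def
    using m mx map_le_trans by blast
  thus ?thesis using m by blast
qed

lemma exists_O:
  fixes x :: "'a::orthocomplemented_lattice \<Rightarrow> bool option"
  assumes px: "partial_hom x"
  shows "\<exists>z. MPH z \<and> (\<forall>a. x a = Some True \<longrightarrow> z a = Some True \<and> z (- a) = Some False)"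
proof -
  have xb: "x bot = Some False" "x top = Some True"
    and xh: "\<And>a b. a \<in> dom x \<Longrightarrow> b \<in> dom x \<Longrightarrow> x (inf a b) = Some (the (x a) \<and> the (x b))"
    using px unfolding partial_hom_def by blast+
  have Tinf: "x (inf a b) = Some True" if "x a = Some True" "x b = Some True" for a b
    using xh[of a b] that by auto
  define F where "F = {b. \<exists>a. x a = Some True \<and> a \<le> b}"
  define I where "I = {c. \<exists>a. x a = Some True \<and> c \<le> - a}"
  have disj: False if cc: "c \<in> F" "c \<in> I" for c
  proof -
    obtain a1 a2 where a: "x a1 = Some True" "a1 \<le> c" "x a2 = Some True" "c \<le> - a2"
      using cc unfolding F_def I_def by blast
    have "inf a1 a2 \<le> inf (- a2) a2" using a by (meson inf_mono order_trans order_refl)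
    hence "inf a1 a2 = bot" by (simp add: inf_commute bot_unique)
    with Tinf[OF a(1) a(3)] xb show False by simp
  qed
  have Fsup: "sup a b \<in> F" if "a \<in> F \<or> b \<in> F" for a b
    using that unfolding F_def by (auto intro: le_supI1 le_supI2)
  have Finf: "inf a b \<in> F" if ab: "a \<in> F" "b \<in> F" for a b
  proof -
    obtain a1 a2 where a: "x a1 = Some True" "a1 \<le> a" "x a2 = Some True" "a2 \<le> b"
      using ab unfolding F_def by blast
    show ?thesis unfolding F_def using Tinf[OF a(1) a(3)] a(2,4) inf_mono by blast
  qed
  have Iinf: "inf a b \<in> I" if "a \<in> I \<or> b \<in> I" for a b
    using that unfolding I_def by (auto intro: le_infI1 le_infI2)
  have Isup: "sup a b \<in> I" if ab: "a \<in> I" "b \<in> I" for a b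
  proof -
    obtain a1 a2 where a: "x a1 = Some True" "a \<le> - a1" "x a2 = Some True" "b \<le> - a2"
      using ab unfolding I_def by blast
    have "sup a b \<le> - (inf a1 a2)" using a(2,4) by (simp add: le_supI1 le_supI2)
    thus ?thesis unfolding I_def using Tinf[OF a(1) a(3)] by blast
  qed
  define h0 where "h0 c = (if c \<in> F then Some True else if c \<in> I then Some False else None)" for c
  have hF: "h0 c = Some True" if "c \<in> F" for c using that unfolding h0_def by simp
  have hI: "h0 c = Some False" if "c \<in> I" for c using that disj[of c] unfolding h0_def by auto
  have domh: "dom h0 = F \<union> I" unfolding h0_def dom_def by auto
  have topF: "top \<in> F" unfolding F_def using xb by blast
  have botI: "bot \<in> I" unfolding I_def using xb by auto
  have "partial_hom h0" unfolding partial_hom_def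
  proof (intro conjI ballI)
    show "bot \<in> dom h0" "top \<in> dom h0" using topF botI domh by auto
    show "h0 bot = Some False" using hI botI by blast
    show "h0 top = Some True" using hF topF by blast
  next
    fix a b assume "a \<in> dom h0" "b \<in> dom h0"
    hence ab: "a \<in> F \<union> I" "b \<in> F \<union> I" using domh by auto
    show "sup a b \<in> dom h0" using ab Fsup Isup domh by blast
    show "inf a b \<in> dom h0" using ab Finf Iinf domh by blast
    show "h0 (sup a b) = Some (the (h0 a) \<or> the (h0 b))"
    proof (cases "a \<in> F \<or> b \<in> F")
      case True
      hence "h0 (sup a b) = Some True" using Fsup hF by blast
      moreover have "h0 a = Some True \<or> h0 b = Some True" using True hF by blast
      ultimately show ?thesis by force
    next
      case False
      hence "a \<in> I" "b \<in> I" using ab by blast+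
      hence "h0 (sup a b) = Some False" "h0 a = Some False" "h0 b = Some False" using Isup hI by blast+
      thus ?thesis by simp
    qed
    show "h0 (inf a b) = Some (the (h0 a) \<and> the (h0 b))"
    proof (cases "a \<in> I \<or> b \<in> I")
      case True
      hence "h0 (inf a b) = Some False" using Iinf hI by blast
      moreover have "h0 a = Some False \<or> h0 b = Some False" using True hI by blast
      ultimately show ?thesis by force
    next
      case False
      hence "a \<in> F" "b \<in> F" using ab by blast+
      hence "h0 (inf a b) = Some True" "h0 a = Some True" "h0 b = Some True" using Finf hF by blast+
      thus ?thesis by simp
    qed
  qed
  then obtain z where z: "MPH z" "h0 \<subseteq>\<^sub>m z" using MPH_extend by blast
  have "z a = Some True \<and> z (- a) = Some False" if "x a = Some True" for a
  proof -
    have "a \<in> F" "- a \<in> I" unfolding F_def I_def using that by auto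
    hence "h0 a = Some True" "h0 (- a) = Some False" using hF hI by blast+
    thus ?thesis using z(2) unfolding map_le_def by (metis domI)
  qed
  thus ?thesis using z by blast
qed

theorem theorem4p5:
  fixes x y :: "'a::orthocomplemented_lattice \<Rightarrow> bool option"
  assumes "x \<in> PL" and "y \<in> PL"
  shows "dualg (dualg x) = x \<and>
         (succE x \<subseteq> succE y \<longrightarrow> predE (dualg x) \<subseteq> predE (dualg y)) \<and>
         (predE x \<subseteq> predE y \<longrightarrow> succE (dualg x) \<subseteq> succE (dualg y)) \<and>
         (\<exists>z\<in>PL. succE z \<subseteq> succE x \<and> predE z \<subseteq> predE (dualg x))"
proof (intro conjI impI)
  show "dualg (dualg x) = x" by (rule dualg_dualg)
  have gPL: "dualg w \<in> PL" if "w \<in> PL" for w :: "'a \<Rightarrow> bool option"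
    using that MPH_dualg unfolding PL_def by blast
  show "predE (dualg x) \<subseteq> predE (dualg y)" if H: "succE x \<subseteq> succE y"
  proof
    fix w assume "w \<in> predE (dualg x)"
    hence w: "w \<in> PL" "dualE x (dualg w)" unfolding predE_def using dualE_dualg by blast+
    hence "dualg w \<in> succE x" using gPL unfolding succE_def by blast
    hence "dualE y (dualg w)" using H unfolding succE_def by blast
    thus "w \<in> predE (dualg y)" using w unfolding predE_def using dualE_dualg by blast
  qed
  show "succE (dualg x) \<subseteq> succE (dualg y)" if H: "predE x \<subseteq> predE y"
  proof
    have eq: "dualE (dualg u) w \<longleftrightarrow> dualE (dualg w) u" for u w :: "'a \<Rightarrow> bool option"
      using dualE_dualg[of "dualg u" "dualg w"] by (simp add: dualg_dualg)
    fix w assume "w \<in> succE (dualg x)"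
    hence w: "w \<in> PL" "dualE (dualg w) x" unfolding succE_def using eq by blast+
    hence "dualg w \<in> predE x" using gPL unfolding predE_def by blast
    hence "dualE (dualg w) y" using H unfolding predE_def by blast
    thus "w \<in> succE (dualg y)" using w unfolding succE_def using eq by blast
  qed
  have "partial_hom x" using assms(1) unfolding PL_def MPH_def by blast
  then obtain z where z: "MPH z" "\<And>a. x a = Some True \<Longrightarrow> z a = Some True \<and> z (- a) = Some False"
    using exists_O by blast
  have "succE z \<subseteq> succE x"
  proof
    fix w assume "w \<in> succE z"
    hence w: "w \<in> PL" "dualE z w" unfolding succE_def by blast+
    have "dualE x w" unfolding dualE_alt using w(2) z(2) unfolding dualE_alt by blast
    thus "w \<in> succE x" using w unfolding succE_def by blast
  qed
  moreover have "predE z \<subseteq> predE (dualg x)"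
  proof
    fix w assume "w \<in> predE z"
    hence w: "w \<in> PL" "dualE w z" unfolding predE_def by blast+
    have "dualE w (dualg x)" unfolding dualE_alt dualg_False
    proof (intro allI notI)
      fix a assume "w a = Some True \<and> x (- a) = Some True"
      thus False using w(2) z(2)[of "- a"] unfolding dualE_alt by simp
    qed
    thus "w \<in> predE (dualg x)" using w unfolding predE_def by blast
  qed
  moreover have "z \<in> PL" using z unfolding PL_def by blast
  ultimately show "\<exists>z\<in>PL. succE z \<subseteq> succE x \<and> predE z \<subseteq> predE (dualg x)" by blast
qed

end
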